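(* Let $\mathcal{X}\subset\mathbb{R}^d$ be compact with diameter $|\mathcal{X}|=\max_{x,x'\in\mathcal{X}}\|x-x'\|$, and let $\epsilon>0$, $\delta\in(0,1)$. Let $\{(x_i,y_i)\}_{i=1}^M\subset\mathcal{X}\times\mathbb{R}$ be a training set and $\sigma_y^2=\frac1M\sum_{i=1}^M y_i^2$. Let $f$ be the quantum (VQC) model with $L$ Pauli encoding gates on each of the $d$ input dimensions, with full freedom on its Fourier coefficients, trained by ridge regression with regularization $\lambda>0$. Let $\tilde f$ be the Random Fourier Features model with $D$ frequencies obtained by distinct sampling, trained on the same dataset with the same regularization $\lambda$. Then $|f(x)-\tilde f(x)|\le\epsilon$ holds with probability at least $1-\delta$ for a number of samples $$D=\Omega\!\left(\frac{d\,C_1(1+\lambda)^2}{\lambda^4\epsilon^2}\left[\log(dL^2|\mathcal{X}|)+\log\frac{C_2(1+\lambda)}{\epsilon\lambda^2}-\log\delta\right]\right),$$ where $C_1,C_2$ are constants depending only on $\sigma_y$ and $|\mathcal{X}|$, and $\Omega(\cdot)$ denotes the asymptotic "Big-Omega" lower-bound notation.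
   Context: Pauli encoding: each of the $L$ encoding gates per input coordinate $x_k$ has the form $e^{-i x_k \sigma/2}$ with $\sigma$ a Pauli matrix, so the frequency spectrum of the model is $\Omega=\{-L,\dots,L\}^d\subset\mathbb{Z}^d$. A VQC model "with full freedom on the Fourier coefficients" is any function $f(x)=\sum_{\omega\in\Omega}a_\omega\cos(\omega^Tx)+b_\omega\sin(\omega^Tx)$ with arbitrary real coefficients, i.e. a linear model $\mathbf{w}^T\phi(x)$ with feature vector $\phi(x)=\frac{1}{\sqrt{|\Omega|}}(\cos(\omega^Tx),\sin(\omega^Tx))_{\omega\in\Omega}$; equivalently a kernel ridge regression with the shift-invariant kernel $k(x,x')=\frac1{|\Omega|}\sum_{\omega\in\Omega}\cos(\omega^T(x-x'))$. Training with regularization $\lambda$ means minimizing $\frac1M\sum_i|\mathbf{w}^T\phi(x_i)-y_i|^2+\lambda\|\mathbf{w}\|^2$. Distinct sampling RFF model: sample $D$ frequencies $\omega_1,\dots,\omega_D$ i.i.d. uniformly from $\Omega$, set $\tilde\phi(x)=\frac1{\sqrt D}(\cos(\omega_j^Tx),\sin(\omega_j^Tx))_{j=1}^D$, and let $\tilde f(x)=\tilde{\mathbf{w}}^T\tilde\phi(x)$ where $\tilde{\mathbf{w}}$ solves the same ridge regression problem with $\tilde\phi$ in place of $\phi$. *)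

theory Defs
  imports "HOL-Analysis.Analysis" "HOL-Probability.Probability"
begin

text \<open>Points of R^d are functions nat => real using coordinates k < d (zero elsewhere);
frequencies in Z^d are functions nat => int.\<close>

definition in_Rd :: "nat \<Rightarrow> (nat \<Rightarrow> real) \<Rightarrow> bool" where
  "in_Rd d x \<longleftrightarrow> (\<forall>k\<ge>d. x k = 0)"

definition dist_d :: "nat \<Rightarrow> (nat \<Rightarrow> real) \<Rightarrow> (nat \<Rightarrow> real) \<Rightarrow> real" where
  "dist_d d x x' = sqrt (\<Sum>k<d. (x k - x' k)^2)"

definition diam_d :: "nat \<Rightarrow> (nat \<Rightarrow> real) set \<Rightarrow> real" where
  "diam_d d X = (SUP p\<in>X \<times> X. dist_d d (fst p) (snd p))"

definition freq_dot :: "nat \<Rightarrow> (nat \<Rightarrow> int) \<Rightarrow> (nat \<Rightarrow> real) \<Rightarrow> real" where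
  "freq_dot d w x = (\<Sum>k<d. of_int (w k) * x k)"

text \<open>Frequency spectrum Omega = {-L..L}^d of the Pauli-encoded VQC.\<close>
definition spectrum :: "nat \<Rightarrow> nat \<Rightarrow> (nat \<Rightarrow> int) set" where
  "spectrum d L = PiE {..<d} (\<lambda>_. {- int L .. int L})"

text \<open>Linear model w^T phi(x) with feature map
  phi(x) = 1/sqrt|I| (cos(freq j ^T x), sin(freq j ^T x))_{j in I};
  the weight vector w is the pair (a, b) of cosine and sine coefficients.\<close>
definition feat_model :: "nat \<Rightarrow> 'i set \<Rightarrow> ('i \<Rightarrow> nat \<Rightarrow> int)
    \<Rightarrow> ('i \<Rightarrow> real) \<times> ('i \<Rightarrow> real) \<Rightarrow> (nat \<Rightarrow> real) \<Rightarrow> real" where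
  "feat_model d I fr w x = (1 / sqrt (real (card I))) *
     (\<Sum>j\<in>I. fst w j * cos (freq_dot d (fr j) x) + snd w j * sin (freq_dot d (fr j) x))"

definition weights :: "'i set \<Rightarrow> (('i \<Rightarrow> real) \<times> ('i \<Rightarrow> real)) set" where
  "weights I = {w. \<forall>j. j \<notin> I \<longrightarrow> fst w j = 0 \<and> snd w j = 0}"

definition ridge_obj :: "nat \<Rightarrow> 'i set \<Rightarrow> ('i \<Rightarrow> nat \<Rightarrow> int) \<Rightarrow> nat
    \<Rightarrow> (nat \<Rightarrow> nat \<Rightarrow> real) \<Rightarrow> (nat \<Rightarrow> real) \<Rightarrow> real
    \<Rightarrow> ('i \<Rightarrow> real) \<times> ('i \<Rightarrow> real) \<Rightarrow> real" where
  "ridge_obj d I fr M xs ys lam w =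
     (1 / real M) * (\<Sum>i<M. (feat_model d I fr w (xs i) - ys i)^2)
     + lam * (\<Sum>j\<in>I. (fst w j)^2 + (snd w j)^2)"

text \<open>The ridge regression solution (unique for lambda > 0).\<close>
definition ridge_weights :: "nat \<Rightarrow> 'i set \<Rightarrow> ('i \<Rightarrow> nat \<Rightarrow> int) \<Rightarrow> nat
    \<Rightarrow> (nat \<Rightarrow> nat \<Rightarrow> real) \<Rightarrow> (nat \<Rightarrow> real) \<Rightarrow> real
    \<Rightarrow> ('i \<Rightarrow> real) \<times> ('i \<Rightarrow> real)" where
  "ridge_weights d I fr M xs ys lam =
     (THE w. w \<in> weights I \<and>
        (\<forall>v\<in>weights I. ridge_obj d I fr M xs ys lam w \<le> ridge_obj d I fr M xs ys lam v))"

definition ridge_model :: "nat \<Rightarrow> 'i set \<Rightarrow> ('i \<Rightarrow> nat \<Rightarrow> int) \<Rightarrow> nat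
    \<Rightarrow> (nat \<Rightarrow> nat \<Rightarrow> real) \<Rightarrow> (nat \<Rightarrow> real) \<Rightarrow> real \<Rightarrow> (nat \<Rightarrow> real) \<Rightarrow> real" where
  "ridge_model d I fr M xs ys lam x = feat_model d I fr (ridge_weights d I fr M xs ys lam) x"

text \<open>VQC with full freedom on the Fourier coefficients, trained by ridge regression.\<close>
definition vqc_model :: "nat \<Rightarrow> nat \<Rightarrow> nat \<Rightarrow> (nat \<Rightarrow> nat \<Rightarrow> real) \<Rightarrow> (nat \<Rightarrow> real)
    \<Rightarrow> real \<Rightarrow> (nat \<Rightarrow> real) \<Rightarrow> real" where
  "vqc_model d L M xs ys lam = ridge_model d (spectrum d L) id M xs ys lam"

definition rff_model :: "nat \<Rightarrow> nat \<Rightarrow> (nat \<Rightarrow> nat \<Rightarrow> int) \<Rightarrow> nat \<Rightarrow> (nat \<Rightarrow> nat \<Rightarrow> real)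
    \<Rightarrow> (nat \<Rightarrow> real) \<Rightarrow> real \<Rightarrow> (nat \<Rightarrow> real) \<Rightarrow> real" where
  "rff_model d D om M xs ys lam = ridge_model d {..<D} om M xs ys lam"

text \<open>Distinct sampling: D frequencies i.i.d. uniform on the spectrum.\<close>
definition distinct_sampling :: "nat \<Rightarrow> nat \<Rightarrow> nat \<Rightarrow> (nat \<Rightarrow> nat \<Rightarrow> int) pmf" where
  "distinct_sampling d L D = Pi_pmf {..<D} (\<lambda>_. 0) (\<lambda>_. pmf_of_set (spectrum d L))"

definition sigma_y :: "nat \<Rightarrow> (nat \<Rightarrow> real) \<Rightarrow> real" where
  "sigma_y M ys = sqrt ((1 / real M) * (\<Sum>i<M. (ys i)^2))"

end

theory Submission
  imports Defs "Jordan_Normal_Form.Determinant"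
begin

lemma mat_vec_idx:
  assumes "A \<in> carrier_mat M M" "v \<in> carrier_vec M" "i < M"
  shows "(A *\<^sub>v v) $ i = (\<Sum>l<M. A $$ (i,l) * v $ l)"
  using assms by (simp add: scalar_prod_def lessThan_atLeast0 mult_mat_vec_def row_def)

lemma lin_solve:
  fixes Kf :: "nat \<Rightarrow> nat \<Rightarrow> real" and y :: "nat \<Rightarrow> real" and c :: real
  assumes psd: "\<And>e. (\<Sum>i<M. \<Sum>l<M. e i * Kf i l * e l) \<ge> 0" and c: "c \<ge> 0"
  shows "\<exists>r. \<forall>i<M. r i + c * (\<Sum>l<M. Kf i l * r l) = y i"
proof -
  define A where "A = mat M M (\<lambda>(i,l). (if i = l then 1 else 0) + c * Kf i l)"
  have A: "A \<in> carrier_mat M M" unfolding A_def by simp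
  have Av: "(A *\<^sub>v v) $ i = v $ i + c * (\<Sum>l<M. Kf i l * v $ l)"
    if v: "v \<in> carrier_vec M" and i: "i < M" for v i
  proof -
    have "(A *\<^sub>v v) $ i = (\<Sum>l<M. ((if i = l then 1 else 0) + c * Kf i l) * v $ l)"
      using mat_vec_idx[OF A v i] i by (simp add: A_def)
    also have "\<dots> = (\<Sum>l<M. (if i = l then v $ l else 0) + c * (Kf i l * v $ l))"
      by (intro sum.cong) (auto simp: algebra_simps)
    also have "\<dots> = (\<Sum>l<M. (if i = l then v $ l else 0)) + c * (\<Sum>l<M. Kf i l * v $ l)"
      by (simp only: sum.distrib sum_distrib_left)
    also have "(\<Sum>l<M. (if i = l then v $ l else 0)) = v $ i" using i by (subst sum.delta') auto
    finally show ?thesis .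
  qed
  have "det A \<noteq> 0"
  proof
    assume "det A = 0"
    then obtain v where v: "v \<in> carrier_vec M" "v \<noteq> 0\<^sub>v M" "A *\<^sub>v v = 0\<^sub>v M"
      using det_0_iff_vec_prod_zero_field[OF A] by blast
    define e where "e = (\<lambda>i. v $ i)"
    have ei: "e i + c * (\<Sum>l<M. Kf i l * e l) = 0" if "i < M" for i
      using Av[OF v(1) that] v(3) that by (simp add: e_def)
    have "0 = (\<Sum>i<M. e i * (e i + c * (\<Sum>l<M. Kf i l * e l)))" using ei by simp
    also have "\<dots> = (\<Sum>i<M. e i ^ 2) + c * (\<Sum>i<M. \<Sum>l<M. e i * Kf i l * e l)"
      by (simp add: algebra_simps sum.distrib sum_distrib_left power2_eq_square)
    finally have eq: "(\<Sum>i<M. e i ^ 2) + c * (\<Sum>i<M. \<Sum>l<M. e i * Kf i l * e l) = 0" by simp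
    have "c * (\<Sum>i<M. \<Sum>l<M. e i * Kf i l * e l) \<ge> 0" using psd c by simp
    with eq have "(\<Sum>i<M. e i ^ 2) \<le> 0" by linarith
    moreover have "(\<Sum>i<M. e i ^ 2) \<ge> 0" by (intro sum_nonneg) auto
    ultimately have "(\<Sum>i<M. e i ^ 2) = 0" by linarith
    hence "\<forall>i\<in>{..<M}. e i ^ 2 = 0"
      by (subst (asm) sum_nonneg_eq_0_iff) auto
    hence "v = 0\<^sub>v M" using v(1) by (intro eq_vecI) (auto simp: e_def)
    with v(2) show False by simp
  qed
  from det_non_zero_imp_unit[OF A this, of "()"]
  obtain B where B: "B \<in> carrier_mat M M" and AB: "A * B = 1\<^sub>m M"
    unfolding Units_def ring_mat_def by auto
  define yv where "yv = vec M y"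
  have yv: "yv \<in> carrier_vec M" by (simp add: yv_def)
  define rv where "rv = B *\<^sub>v yv"
  have rv: "rv \<in> carrier_vec M" using B yv unfolding rv_def by (rule mult_mat_vec_carrier)
  have "A *\<^sub>v rv = yv" unfolding rv_def
    using assoc_mult_mat_vec[OF A B yv] AB yv by simp
  show ?thesis
  proof (intro exI allI impI)
    fix i assume i: "i < M"
    have "(A *\<^sub>v rv) $ i = y i" using \<open>A *\<^sub>v rv = yv\<close> i by (simp add: yv_def)
    thus "rv $ i + c * (\<Sum>l<M. Kf i l * rv $ l) = y i" using Av[OF rv i] by simp
  qed
qed

definition kern :: "nat \<Rightarrow> 'i set \<Rightarrow> ('i \<Rightarrow> nat \<Rightarrow> int) \<Rightarrow> (nat \<Rightarrow> real) \<Rightarrow> (nat \<Rightarrow> real) \<Rightarrow> real" where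
  "kern d I fr x x' = (1 / real (card I)) * (\<Sum>j\<in>I. cos (freq_dot d (fr j) x) * cos (freq_dot d (fr j) x')
      + sin (freq_dot d (fr j) x) * sin (freq_dot d (fr j) x'))"

lemma sq_sum_double: "(\<Sum>i<M. (a::nat \<Rightarrow> real) i)^2 = (\<Sum>i<M. \<Sum>l<M. a i * a l)"
  by (simp add: power2_eq_square sum_product)

lemma kern_psd: "(\<Sum>i<M. \<Sum>l<M. e i * kern d I fr (xs i) (xs l) * e l) \<ge> 0"
proof -
  define C where "C = (\<lambda>j i. cos (freq_dot d (fr j) (xs i)))"
  define S where "S = (\<lambda>j i. sin (freq_dot d (fr j) (xs i)))"
  have "(\<Sum>i<M. \<Sum>l<M. e i * kern d I fr (xs i) (xs l) * e l)
     = (1 / real (card I)) * (\<Sum>i<M. \<Sum>l<M. \<Sum>j\<in>I. e i * e l * (C j i * C j l + S j i * S j l))"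
    by (simp add: kern_def C_def S_def sum_distrib_left sum_distrib_right mult_ac)
  also have "(\<Sum>i<M. \<Sum>l<M. \<Sum>j\<in>I. e i * e l * (C j i * C j l + S j i * S j l))
     = (\<Sum>j\<in>I. \<Sum>i<M. \<Sum>l<M. e i * e l * (C j i * C j l + S j i * S j l))"
  proof -
    have "(\<Sum>i<M. \<Sum>l<M. \<Sum>j\<in>I. e i * e l * (C j i * C j l + S j i * S j l))
       = (\<Sum>i<M. \<Sum>j\<in>I. \<Sum>l<M. e i * e l * (C j i * C j l + S j i * S j l))"
      by (rule sum.cong[OF refl], rule sum.swap)
    also have "\<dots> = (\<Sum>j\<in>I. \<Sum>i<M. \<Sum>l<M. e i * e l * (C j i * C j l + S j i * S j l))"
      by (rule sum.swap)
    finally show ?thesis .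
  qed
  also have "\<dots> = (\<Sum>j\<in>I. (\<Sum>i<M. e i * C j i)^2 + (\<Sum>i<M. e i * S j i)^2)"
  proof (rule sum.cong[OF refl])
    fix j assume "j \<in> I"
    show "(\<Sum>i<M. \<Sum>l<M. e i * e l * (C j i * C j l + S j i * S j l)) =
          (\<Sum>i<M. e i * C j i)^2 + (\<Sum>i<M. e i * S j i)^2"
    proof -
      have 1: "(\<Sum>i<M. e i * C j i)^2 = (\<Sum>i<M. \<Sum>l<M. (e i * C j i) * (e l * C j l))"
        by (simp add: power2_eq_square sum_product)
      have 2: "(\<Sum>i<M. e i * S j i)^2 = (\<Sum>i<M. \<Sum>l<M. (e i * S j i) * (e l * S j l))"
        by (simp add: power2_eq_square sum_product)
      show ?thesis unfolding 1 2 sum.distrib[symmetric] by (simp add: algebra_simps)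
    qed
  qed
  finally show ?thesis by (auto intro!: divide_nonneg_nonneg sum_nonneg add_nonneg_nonneg)
qed

definition padd :: "('i \<Rightarrow> real) \<times> ('i \<Rightarrow> real) \<Rightarrow> ('i \<Rightarrow> real) \<times> ('i \<Rightarrow> real) \<Rightarrow> ('i \<Rightarrow> real) \<times> ('i \<Rightarrow> real)" where
  "padd w u = (\<lambda>j. fst w j + fst u j, \<lambda>j. snd w j + snd u j)"

lemma feat_padd: "feat_model d I fr (padd w u) x = feat_model d I fr w x + feat_model d I fr u x"
  by (simp add: feat_model_def padd_def sum.distrib algebra_simps)

lemma ridge_char:
  fixes I :: "'i set" and fr :: "'i \<Rightarrow> nat \<Rightarrow> int"
  assumes fin: "finite I" and ne: "I \<noteq> {}" and lam: "lam > 0" and M: "M \<ge> 1"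
  shows "\<exists>r. (\<forall>i<M. r i + (1 / (real M * lam)) * (\<Sum>l<M. kern d I fr (xs i) (xs l) * r l) = ys i)
           \<and> (\<forall>x. ridge_model d I fr M xs ys lam x = (1 / (real M * lam)) * (\<Sum>i<M. r i * kern d I fr x (xs i)))"
proof -
  define c0 where "c0 = 1 / (real M * lam)"
  have c0: "c0 \<ge> 0" using lam by (simp add: c0_def)
  obtain r where r: "\<forall>i<M. r i + c0 * (\<Sum>l<M. kern d I fr (xs i) (xs l) * r l) = ys i"
    using lin_solve[where M=M and Kf="\<lambda>i l. kern d I fr (xs i) (xs l)" and c=c0 and y=ys, OF kern_psd c0] by blast
  define n where "n = real (card I)"
  have n: "n > 0" using fin ne by (simp add: n_def card_gt_0_iff)
  define s where "s = 1 / sqrt n"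
  have ss: "s * s = 1 / n" using n by (simp add: s_def)
  define C where "C = (\<lambda>j x. cos (freq_dot d (fr j) x))"
  define S where "S = (\<lambda>j x. sin (freq_dot d (fr j) x))"
  have fm: "feat_model d I fr w x = s * (\<Sum>j\<in>I. fst w j * C j x + snd w j * S j x)" for w x
    by (simp add: feat_model_def s_def n_def C_def S_def)
  have kn: "kern d I fr x x' = (1/n) * (\<Sum>j\<in>I. C j x * C j x' + S j x * S j x')" for x x'
    by (simp add: kern_def n_def C_def S_def)
  define wa where "wa = (\<lambda>j. if j \<in> I then s * c0 * (\<Sum>i<M. r i * C j (xs i)) else 0)"
  define wb where "wb = (\<lambda>j. if j \<in> I then s * c0 * (\<Sum>i<M. r i * S j (xs i)) else 0)"
  define ws where "ws = (wa, wb)"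
  have ws_w: "ws \<in> weights I" by (simp add: weights_def ws_def wa_def wb_def)
  have F1: "feat_model d I fr ws x = c0 * (\<Sum>i<M. r i * kern d I fr x (xs i))" for x
  proof -
    have "feat_model d I fr ws x = s * (\<Sum>j\<in>I. s * c0 * (\<Sum>i<M. r i * (C j (xs i) * C j x + S j (xs i) * S j x)))"
      unfolding fm ws_def wa_def wb_def
      by (intro arg_cong[where f="\<lambda>t. s * t"] sum.cong refl)
         (simp add: sum_distrib_left sum_distrib_right sum.distrib[symmetric] algebra_simps)
    also have "\<dots> = (s * s) * c0 * (\<Sum>j\<in>I. \<Sum>i<M. r i * (C j (xs i) * C j x + S j (xs i) * S j x))"
      by (simp add: sum_distrib_left mult_ac)
    also have "(\<Sum>j\<in>I. \<Sum>i<M. r i * (C j (xs i) * C j x + S j (xs i) * S j x))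
             = (\<Sum>i<M. \<Sum>j\<in>I. r i * (C j (xs i) * C j x + S j (xs i) * S j x))"
      by (rule sum.swap)
    also have "(s * s) * c0 * \<dots> = c0 * (\<Sum>i<M. r i * kern d I fr x (xs i))"
      unfolding ss kn by (simp add: sum_distrib_left mult_ac)
    finally show ?thesis .
  qed
  have F3: "(\<Sum>j\<in>I. wa j * fst u j + wb j * snd u j) = c0 * (\<Sum>i<M. r i * feat_model d I fr u (xs i))" for u
  proof -
    have "(\<Sum>j\<in>I. wa j * fst u j + wb j * snd u j)
        = (\<Sum>j\<in>I. \<Sum>i<M. s * c0 * (r i * (fst u j * C j (xs i) + snd u j * S j (xs i))))"
      unfolding wa_def wb_def
      by (intro sum.cong refl)
         (simp add: sum_distrib_left sum_distrib_right sum.distrib[symmetric] algebra_simps)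
    also have "\<dots> = (\<Sum>i<M. \<Sum>j\<in>I. s * c0 * (r i * (fst u j * C j (xs i) + snd u j * S j (xs i))))"
      by (rule sum.swap)
    also have "\<dots> = c0 * (\<Sum>i<M. r i * feat_model d I fr u (xs i))"
      unfolding fm by (simp add: sum_distrib_left mult_ac)
    finally show ?thesis .
  qed
  have F4: "feat_model d I fr ws (xs i) - ys i = - r i" if "i < M" for i
  proof -
    have "r i + c0 * (\<Sum>l<M. kern d I fr (xs i) (xs l) * r l) = ys i" using r that by blast
    moreover have "(\<Sum>l<M. kern d I fr (xs i) (xs l) * r l) = (\<Sum>l<M. r l * kern d I fr (xs i) (xs l))"
      by (simp add: mult.commute)
    ultimately have "r i + c0 * (\<Sum>l<M. r l * kern d I fr (xs i) (xs l)) = ys i" by simp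
    thus ?thesis unfolding F1 by linarith
  qed
  define obj where "obj = ridge_obj d I fr M xs ys lam"
  have lc: "lam * c0 = 1 / real M" using lam by (simp add: c0_def)
  have expand: "obj v = obj ws + (1 / real M) * (\<Sum>i<M. (feat_model d I fr (fst v - wa, snd v - wb) (xs i))^2)
       + lam * (\<Sum>j\<in>I. (fst v j - wa j)^2 + (snd v j - wb j)^2)" for v
  proof -
    define u where "u = (fst v - wa, snd v - wb)"
    define g where "g = (\<lambda>i. feat_model d I fr u (xs i))"
    have vu: "v = padd ws u" by (simp add: padd_def ws_def u_def)
    have E1: "(\<Sum>i<M. (feat_model d I fr v (xs i) - ys i)^2)
        = (\<Sum>i<M. (r i)^2) - 2 * (\<Sum>i<M. r i * g i) + (\<Sum>i<M. (g i)^2)"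
    proof -
      have "(\<Sum>i<M. (feat_model d I fr v (xs i) - ys i)^2) = (\<Sum>i<M. (r i)^2 - 2 * (r i * g i) + (g i)^2)"
      proof (intro sum.cong refl)
        fix i assume "i \<in> {..<M}"
        hence "feat_model d I fr v (xs i) - ys i = g i - r i"
          using F4[of i] unfolding vu feat_padd g_def by simp
        thus "(feat_model d I fr v (xs i) - ys i)^2 = (r i)^2 - 2 * (r i * g i) + (g i)^2"
          by (simp only:) (simp add: power2_eq_square algebra_simps)
      qed
      thus ?thesis by (simp add: sum.distrib sum_subtractf sum_distrib_left)
    qed
    have E1': "(\<Sum>i<M. (feat_model d I fr ws (xs i) - ys i)^2) = (\<Sum>i<M. (r i)^2)"
      by (intro sum.cong refl) (simp add: F4)
    have E2: "(\<Sum>j\<in>I. (fst v j)^2 + (snd v j)^2) = (\<Sum>j\<in>I. (wa j)^2 + (wb j)^2)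
        + 2 * (\<Sum>j\<in>I. wa j * fst u j + wb j * snd u j) + (\<Sum>j\<in>I. (fst u j)^2 + (snd u j)^2)"
    proof -
      have "(\<Sum>j\<in>I. (fst v j)^2 + (snd v j)^2) = (\<Sum>j\<in>I. ((wa j)^2 + (wb j)^2)
        + 2 * (wa j * fst u j + wb j * snd u j) + ((fst u j)^2 + (snd u j)^2))"
        by (intro sum.cong refl) (simp add: u_def power2_eq_square algebra_simps)
      thus ?thesis by (simp add: sum.distrib sum_distrib_left)
    qed
    have "obj v = (1 / real M) * ((\<Sum>i<M. (r i)^2) - 2 * (\<Sum>i<M. r i * g i) + (\<Sum>i<M. (g i)^2))
        + lam * ((\<Sum>j\<in>I. (wa j)^2 + (wb j)^2)
        + 2 * (c0 * (\<Sum>i<M. r i * g i)) + (\<Sum>j\<in>I. (fst u j)^2 + (snd u j)^2))"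
    proof -
      have F3': "(\<Sum>j\<in>I. wa j * fst u j + wb j * snd u j) = c0 * (\<Sum>i<M. r i * g i)"
        unfolding F3 g_def ..
      show ?thesis unfolding obj_def ridge_obj_def E1 E2 F3' by (simp only:)
    qed
    also have "\<dots> = ((1 / real M) * (\<Sum>i<M. (r i)^2) + lam * (\<Sum>j\<in>I. (wa j)^2 + (wb j)^2))
        + (1 / real M) * (\<Sum>i<M. (g i)^2) + lam * (\<Sum>j\<in>I. (fst u j)^2 + (snd u j)^2)
        + 2 * (lam * c0 - 1 / real M) * (\<Sum>i<M. r i * g i)"
      by (simp add: algebra_simps)
    also have "(1 / real M) * (\<Sum>i<M. (r i)^2) + lam * (\<Sum>j\<in>I. (wa j)^2 + (wb j)^2) = obj ws"
      unfolding obj_def ridge_obj_def E1' by (simp add: ws_def)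
    finally have "obj v = obj ws + (1 / real M) * (\<Sum>i<M. (g i)^2) + lam * (\<Sum>j\<in>I. (fst u j)^2 + (snd u j)^2)"
      unfolding lc by simp
    thus ?thesis unfolding g_def u_def by simp
  qed
  have ws_min: "obj ws \<le> obj v" for v
    unfolding expand[of v] using lam
    by (intro add_increasing2 mult_nonneg_nonneg sum_nonneg add_nonneg_nonneg) auto
  have uniq: "w = ws" if w: "w \<in> weights I" "\<forall>v\<in>weights I. obj w \<le> obj v" for w
  proof -
    have le: "obj w \<le> obj ws" using w ws_w by blast
    define T where "T = (\<Sum>j\<in>I. (fst w j - wa j)^2 + (snd w j - wb j)^2)"
    have Tn: "T \<ge> 0" unfolding T_def by (intro sum_nonneg) auto
    have Q: "(1 / real M) * (\<Sum>i<M. (feat_model d I fr (fst w - wa, snd w - wb) (xs i))^2) \<ge> 0"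
      by (intro mult_nonneg_nonneg sum_nonneg) auto
    from le expand[of w] have "lam * T \<le> 0" using Q unfolding T_def by linarith
    with lam Tn have "T = 0" by (simp add: mult_le_0_iff)
    hence "\<forall>j\<in>I. (fst w j - wa j)^2 + (snd w j - wb j)^2 = 0"
      unfolding T_def using fin by (subst (asm) sum_nonneg_eq_0_iff) auto
    hence inI: "fst w j = wa j \<and> snd w j = wb j" if "j \<in> I" for j
      using that by (auto simp: add_nonneg_eq_0_iff)
    have "fst w j = fst ws j \<and> snd w j = snd ws j" for j
      using inI[of j] w(1) by (cases "j \<in> I") (auto simp: weights_def ws_def wa_def wb_def)
    thus ?thesis by (simp add: prod_eq_iff fun_eq_iff)
  qed
  have rw: "ridge_weights d I fr M xs ys lam = ws"
    unfolding ridge_weights_def obj_def[symmetric]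
  proof (rule the_equality)
    show "ws \<in> weights I \<and> (\<forall>v\<in>weights I. obj ws \<le> obj v)" using ws_w ws_min by blast
  next
    fix w assume "w \<in> weights I \<and> (\<forall>v\<in>weights I. obj w \<le> obj v)"
    thus "w = ws" using uniq by blast
  qed
  show ?thesis
    by (intro exI[of _ r] conjI) (use r F1 in \<open>simp_all add: ridge_model_def rw c0_def\<close>)
qed

lemma norm_bound:
  fixes K :: "nat \<Rightarrow> nat \<Rightarrow> real"
  assumes psd: "\<And>e. (\<Sum>i<M. \<Sum>l<M. e i * K i l * e l) \<ge> 0" and c: "c \<ge> 0"
    and eq: "\<forall>i<M. r i + c * (\<Sum>l<M. K i l * r l) = y i"
  shows "(\<Sum>i<M. (r i)^2) \<le> (\<Sum>i<M. (y i)^2)"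
proof -
  define q where "q = (\<lambda>i. \<Sum>l<M. K i l * r l)"
  have "(\<Sum>i<M. (y i)^2) = (\<Sum>i<M. (r i + c * q i)^2)"
    using eq by (intro sum.cong refl) (auto simp: q_def)
  also have "\<dots> = (\<Sum>i<M. (r i)^2 + 2 * c * (r i * q i) + c^2 * (q i)^2)"
    by (intro sum.cong refl) (simp add: power2_eq_square algebra_simps)
  also have "\<dots> = (\<Sum>i<M. (r i)^2) + 2 * c * (\<Sum>i<M. r i * q i) + c^2 * (\<Sum>i<M. (q i)^2)"
    by (simp add: sum.distrib sum_distrib_left)
  also have "(\<Sum>i<M. r i * q i) = (\<Sum>i<M. \<Sum>l<M. r i * K i l * r l)"
    by (simp add: q_def sum_distrib_left mult_ac)
  finally have eq2: "(\<Sum>i<M. (y i)^2) = (\<Sum>i<M. (r i)^2) + 2 * c * (\<Sum>i<M. \<Sum>l<M. r i * K i l * r l) + c^2 * (\<Sum>i<M. (q i)^2)" .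
  have "2 * c * (\<Sum>i<M. \<Sum>l<M. r i * K i l * r l) \<ge> 0" using psd[of r] c by simp
  moreover have "c^2 * (\<Sum>i<M. (q i)^2) \<ge> 0" by (intro mult_nonneg_nonneg sum_nonneg) auto
  ultimately show ?thesis using eq2 by linarith
qed

lemma S1_bound: "(\<Sum>i<M. \<bar>v i\<bar>) \<le> sqrt (real M) * sqrt (\<Sum>i<M. (v i :: real)^2)"
proof -
  have "(\<Sum>i<M. \<bar>v i\<bar>)^2 \<le> (\<Sum>i<M. \<bar>v i\<bar>^2) * real M"
    using sum_squared_le_sum_of_squares[of "\<lambda>i. \<bar>v i\<bar>" "{..<M}"] by simp
  hence "(\<Sum>i<M. \<bar>v i\<bar>) \<le> sqrt ((\<Sum>i<M. (v i)^2) * real M)"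
    by (simp add: real_le_rsqrt)
  thus ?thesis by (simp add: real_sqrt_mult mult.commute)
qed

lemma perturb:
  fixes K Kt :: "nat \<Rightarrow> nat \<Rightarrow> real" and kx kxt r rt y :: "nat \<Rightarrow> real"
  assumes lam: "lam > 0" and M: "M \<ge> 1" and eta: "eta \<ge> 0"
    and psd: "\<And>e. (\<Sum>i<M. \<Sum>l<M. e i * K i l * e l) \<ge> 0"
    and psdt: "\<And>e. (\<Sum>i<M. \<Sum>l<M. e i * Kt i l * e l) \<ge> 0"
    and eqr: "\<forall>i<M. r i + (1 / (real M * lam)) * (\<Sum>l<M. K i l * r l) = y i"
    and eqrt: "\<forall>i<M. rt i + (1 / (real M * lam)) * (\<Sum>l<M. Kt i l * rt l) = y i"
    and bK: "\<And>i l. i < M \<Longrightarrow> l < M \<Longrightarrow> \<bar>K i l - Kt i l\<bar> \<le> eta"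
    and bx: "\<And>i. i < M \<Longrightarrow> \<bar>kx i\<bar> \<le> 1"
    and bxt: "\<And>i. i < M \<Longrightarrow> \<bar>kx i - kxt i\<bar> \<le> eta"
  shows "\<bar>(1 / (real M * lam)) * (\<Sum>i<M. r i * kx i) - (1 / (real M * lam)) * (\<Sum>i<M. rt i * kxt i)\<bar>
          \<le> eta * sigma_y M y * (1 + lam) / lam^2"
proof -
  define c where "c = 1 / (real M * lam)"
  have c: "c > 0" using lam M by (simp add: c_def)
  have cM: "c * real M = 1 / lam" using M by (simp add: c_def)
  define e where "e = (\<lambda>i. r i - rt i)"
  define Qe where "Qe = (\<Sum>i<M. (e i)^2)"
  define Qr where "Qr = (\<Sum>i<M. (rt i)^2)"
  define Qy where "Qy = (\<Sum>i<M. (y i)^2)"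
  define S1e where "S1e = (\<Sum>i<M. \<bar>e i\<bar>)"
  define S1r where "S1r = (\<Sum>i<M. \<bar>rt i\<bar>)"
  have QrQy: "Qr \<le> Qy" unfolding Qr_def Qy_def
    using norm_bound[OF psdt less_imp_le[OF c]] eqrt by (simp add: c_def)
  have S1e: "S1e \<le> sqrt (real M) * sqrt Qe" unfolding S1e_def Qe_def by (rule S1_bound)
  have S1r: "S1r \<le> sqrt (real M) * sqrt Qr" unfolding S1r_def Qr_def by (rule S1_bound)
  have eeq: "e i + c * (\<Sum>l<M. K i l * e l) = c * (\<Sum>l<M. (Kt i l - K i l) * rt l)" if "i < M" for i
  proof -
    have "r i + c * (\<Sum>l<M. K i l * r l) = rt i + c * (\<Sum>l<M. Kt i l * rt l)"
      using eqr eqrt that by (simp add: c_def)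
    moreover have B: "(\<Sum>l<M. K i l * e l) = (\<Sum>l<M. K i l * r l) - (\<Sum>l<M. K i l * rt l)"
      by (simp add: e_def algebra_simps sum_subtractf)
    moreover have C: "(\<Sum>l<M. (Kt i l - K i l) * rt l) = (\<Sum>l<M. Kt i l * rt l) - (\<Sum>l<M. K i l * rt l)"
      by (simp add: algebra_simps sum_subtractf)
    moreover have "e i = r i - rt i" by (simp add: e_def)
    ultimately show ?thesis by (simp only: right_diff_distrib)
  qed
  have "Qe + c * (\<Sum>i<M. \<Sum>l<M. e i * K i l * e l) = (\<Sum>i<M. e i * (e i + c * (\<Sum>l<M. K i l * e l)))"
    by (simp add: Qe_def power2_eq_square algebra_simps sum.distrib sum_distrib_left)
  also have "\<dots> = (\<Sum>i<M. e i * (c * (\<Sum>l<M. (Kt i l - K i l) * rt l)))"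
    using eeq by simp
  also have "\<dots> \<le> (\<Sum>i<M. \<bar>e i\<bar> * (c * (\<Sum>l<M. eta * \<bar>rt l\<bar>)))"
  proof (intro sum_mono)
    fix i assume i: "i \<in> {..<M}"
    have "\<bar>\<Sum>l<M. (Kt i l - K i l) * rt l\<bar> \<le> (\<Sum>l<M. \<bar>(Kt i l - K i l) * rt l\<bar>)"
      by (rule sum_abs)
    also have "\<dots> \<le> (\<Sum>l<M. eta * \<bar>rt l\<bar>)"
    proof (intro sum_mono)
      fix l assume "l \<in> {..<M}"
      hence "\<bar>Kt i l - K i l\<bar> \<le> eta" using bK[of i l] i by (simp add: abs_minus_commute)
      thus "\<bar>(Kt i l - K i l) * rt l\<bar> \<le> eta * \<bar>rt l\<bar>"
        by (simp add: abs_mult mult_right_mono)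
    qed
    finally have "\<bar>\<Sum>l<M. (Kt i l - K i l) * rt l\<bar> \<le> (\<Sum>l<M. eta * \<bar>rt l\<bar>)" .
    hence "\<bar>e i * (c * (\<Sum>l<M. (Kt i l - K i l) * rt l))\<bar> \<le> \<bar>e i\<bar> * (c * (\<Sum>l<M. eta * \<bar>rt l\<bar>))"
      using c by (simp add: abs_mult mult_left_mono)
    thus "e i * (c * (\<Sum>l<M. (Kt i l - K i l) * rt l)) \<le> \<bar>e i\<bar> * (c * (\<Sum>l<M. eta * \<bar>rt l\<bar>))"
      by linarith
  qed
  also have "\<dots> = c * eta * S1e * S1r"
    by (simp add: S1e_def S1r_def sum_distrib_left sum_distrib_right mult_ac)
  finally have "Qe + c * (\<Sum>i<M. \<Sum>l<M. e i * K i l * e l) \<le> c * eta * S1e * S1r" .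
  moreover have "c * (\<Sum>i<M. \<Sum>l<M. e i * K i l * e l) \<ge> 0" using psd[of e] c by simp
  ultimately have Qe1: "Qe \<le> c * eta * S1e * S1r" by linarith
  have sQe: "sqrt Qe \<le> eta / lam * sqrt Qr"
  proof (cases "Qe = 0")
    case True
    have "Qr \<ge> 0" unfolding Qr_def by (intro sum_nonneg) auto
    thus ?thesis using True eta lam by simp
  next
    case False
    have Qe0: "Qe > 0" using False unfolding Qe_def by (metis less_eq_real_def sum_nonneg zero_le_power2)
    have "Qe \<le> c * eta * (sqrt (real M) * sqrt Qe) * (sqrt (real M) * sqrt Qr)"
    proof -
      have "S1e * S1r \<le> (sqrt (real M) * sqrt Qe) * (sqrt (real M) * sqrt Qr)"
        by (intro mult_mono S1e S1r) (auto simp: S1e_def S1r_def Qe_def intro!: sum_nonneg mult_nonneg_nonneg)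
      hence "c * eta * (S1e * S1r) \<le> c * eta * ((sqrt (real M) * sqrt Qe) * (sqrt (real M) * sqrt Qr))"
        using c eta by (intro mult_left_mono) auto
      thus ?thesis using Qe1 by (simp add: mult_ac)
    qed
    also have "\<dots> = (c * real M) * eta * sqrt Qe * sqrt Qr"
      by (simp add: mult_ac)
    finally have "Qe \<le> (c * real M) * eta * sqrt Qe * sqrt Qr" .
    moreover have "Qe = sqrt Qe * sqrt Qe" using Qe0 by simp
    ultimately have "sqrt Qe * sqrt Qe \<le> (eta / lam * sqrt Qr) * sqrt Qe"
      by (simp add: cM mult_ac)
    moreover have "sqrt Qe > 0" using Qe0 by simp
    ultimately show ?thesis by (meson mult_right_le_imp_le)
  qed
  have diff: "c * (\<Sum>i<M. r i * kx i) - c * (\<Sum>i<M. rt i * kxt i)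
      = c * (\<Sum>i<M. e i * kx i) + c * (\<Sum>i<M. rt i * (kx i - kxt i))"
    by (simp add: e_def algebra_simps sum.distrib sum_subtractf)
  have b1: "\<bar>\<Sum>i<M. e i * kx i\<bar> \<le> S1e"
  proof -
    have "\<bar>\<Sum>i<M. e i * kx i\<bar> \<le> (\<Sum>i<M. \<bar>e i * kx i\<bar>)" by (rule sum_abs)
    also have "\<dots> \<le> S1e" unfolding S1e_def
      by (intro sum_mono) (use bx in \<open>auto simp: abs_mult intro: mult_left_le\<close>)
    finally show ?thesis .
  qed
  have b2: "\<bar>\<Sum>i<M. rt i * (kx i - kxt i)\<bar> \<le> eta * S1r"
  proof -
    have "\<bar>\<Sum>i<M. rt i * (kx i - kxt i)\<bar> \<le> (\<Sum>i<M. \<bar>rt i * (kx i - kxt i)\<bar>)" by (rule sum_abs)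
    also have "\<dots> \<le> (\<Sum>i<M. eta * \<bar>rt i\<bar>)"
      by (intro sum_mono) (use bxt in \<open>auto simp: abs_mult mult.commute[of eta] intro: mult_left_mono\<close>)
    finally show ?thesis by (simp add: S1r_def sum_distrib_left)
  qed
  have "\<bar>c * (\<Sum>i<M. e i * kx i) + c * (\<Sum>i<M. rt i * (kx i - kxt i))\<bar> \<le> c * S1e + c * (eta * S1r)"
  proof -
    have "\<bar>c * (\<Sum>i<M. e i * kx i) + c * (\<Sum>i<M. rt i * (kx i - kxt i))\<bar>
        \<le> \<bar>c * (\<Sum>i<M. e i * kx i)\<bar> + \<bar>c * (\<Sum>i<M. rt i * (kx i - kxt i))\<bar>"
      by (rule abs_triangle_ineq)
    also have "\<dots> = c * \<bar>\<Sum>i<M. e i * kx i\<bar> + c * \<bar>\<Sum>i<M. rt i * (kx i - kxt i)\<bar>"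
      using c by (simp add: abs_mult)
    also have "\<dots> \<le> c * S1e + c * (eta * S1r)"
      using b1 b2 c by (intro add_mono mult_left_mono) (auto simp: less_imp_le)
    finally show ?thesis .
  qed
  also have "\<dots> \<le> c * (sqrt (real M) * (eta / lam * sqrt Qr)) + c * (eta * (sqrt (real M) * sqrt Qr))"
  proof -
    have "S1e \<le> sqrt (real M) * (eta / lam * sqrt Qr)"
      using S1e mult_left_mono[OF sQe, of "sqrt (real M)"] by simp
    thus ?thesis using S1r c eta by (intro add_mono mult_left_mono) auto
  qed
  also have "\<dots> = c * sqrt (real M) * sqrt Qr * eta * (1 + lam) / lam"
    using lam by (simp add: field_simps)
  also have "\<dots> \<le> c * (sqrt (real M) * sqrt Qy) * eta * (1 + lam) / lam"
  proof -
    have "sqrt (real M) * sqrt Qr \<le> sqrt (real M) * sqrt Qy"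
      using QrQy by (intro mult_left_mono) auto
    thus ?thesis using c eta lam by (intro divide_right_mono mult_right_mono mult_left_mono) auto
  qed
  also have "sqrt (real M) * sqrt Qy = real M * sigma_y M y"
  proof -
    have "sqrt (real M) * sqrt Qy = sqrt (real M * Qy)" by (simp add: real_sqrt_mult)
    also have "real M * Qy = (real M * real M) * (Qy / real M)" using M by simp
    also have "sqrt \<dots> = real M * sqrt (Qy / real M)" by (simp only: real_sqrt_mult real_sqrt_mult_self abs_of_nat)
    finally have "sqrt (real M) * sqrt Qy = real M * sqrt (Qy / real M)" .
    moreover have "Qy / real M = (1 / real M) * (\<Sum>i<M. (y i)^2)" by (simp add: Qy_def)
    ultimately show ?thesis by (simp add: sigma_y_def)
  qed
  also have "c * (real M * sigma_y M y) * eta * (1 + lam) / lam = eta * sigma_y M y * (1 + lam) / lam^2"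
  proof -
    have "c * (real M * sigma_y M y) = sigma_y M y / lam"
      using cM by (metis mult.assoc mult.commute divide_inverse mult_1)
    hence "c * (real M * sigma_y M y) * eta * (1 + lam) / lam = (sigma_y M y / lam) * eta * (1 + lam) / lam"
      by (simp only:)
    also have "\<dots> = eta * sigma_y M y * (1 + lam) / lam^2"
      by (simp add: power2_eq_square)
    finally show ?thesis .
  qed
  finally have "\<bar>c * (\<Sum>i<M. r i * kx i) - c * (\<Sum>i<M. rt i * kxt i)\<bar>
      \<le> eta * sigma_y M y * (1 + lam) / lam^2" unfolding diff .
  thus ?thesis by (simp only: c_def)
qed

lemma hoeff_z:
  fixes z :: "nat \<Rightarrow> real" and Om :: "(nat \<Rightarrow> int) set"
  assumes D: "D \<ge> 1" and t: "t \<ge> 0" and fin: "finite Om" and ne: "Om \<noteq> {}"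
  shows "measure_pmf.prob (Pi_pmf {..<D} (\<lambda>_. 0) (\<lambda>_. pmf_of_set Om))
     {om. t \<le> \<bar>(1 / real D) * (\<Sum>j<D. cos (freq_dot d (om j) z))
                - (1 / real (card Om)) * (\<Sum>w\<in>Om. cos (freq_dot d w z))\<bar>}
     \<le> 2 * exp (- real D * t^2 / 2)"
proof -
  define P where "P = Pi_pmf {..<D} (\<lambda>_. 0) (\<lambda>_. pmf_of_set Om)"
  define g where "g = (\<lambda>w. cos (freq_dot d w z))"
  define m where "m = (1 / real (card Om)) * (\<Sum>w\<in>Om. g w)"
  have Eg: "measure_pmf.expectation P (\<lambda>om. g (om j)) = m" if "j < D" for j
  proof -
    have "measure_pmf.expectation P (\<lambda>om. g (om j)) = measure_pmf.expectation (map_pmf (\<lambda>f. f j) P) g"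
      by simp
    also have "map_pmf (\<lambda>f. f j) P = pmf_of_set Om"
      unfolding P_def using that by (subst Pi_pmf_component) auto
    also have "measure_pmf.expectation (pmf_of_set Om) g = (\<Sum>w\<in>Om. g w) / real (card Om)"
      by (rule integral_pmf_of_set[OF ne fin])
    finally show ?thesis by (simp add: m_def)
  qed
  interpret H: Hoeffding_ineq "measure_pmf P" "{..<D}" "\<lambda>j om. g (om j)" "\<lambda>_. -1" "\<lambda>_. 1"
      "\<Sum>j<D. measure_pmf.expectation P (\<lambda>om. g (om j))"
  proof unfold_locales
    show "prob_space.indep_vars (measure_pmf P) (\<lambda>_. borel) (\<lambda>j om. g (om j)) {..<D}"
      unfolding P_def
      by (rule prob_space.indep_vars_compose2[OF measure_pmf.prob_space_axioms indep_vars_Pi_pmf]) auto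
  qed (auto simp: g_def)
  have mu: "(\<Sum>j<D. measure_pmf.expectation P (\<lambda>om. g (om j))) = real D * m"
    using Eg by simp
  have sum4: "(\<Sum>i<D. (1 - (-1::real))\<^sup>2) = 4 * real D" by simp
  have pos: "(\<Sum>i<D. (1 - (-1::real))\<^sup>2) > 0" using D by simp
  have "measure_pmf.prob P {x \<in> space (measure_pmf P). real D * t \<le> \<bar>(\<Sum>j<D. g (x j)) - real D * m\<bar>}
      \<le> 2 * exp (- 2 * (real D * t)\<^sup>2 / (\<Sum>i<D. (1 - (-1::real))\<^sup>2))"
    using H.Hoeffding_ineq_abs_ge[of "real D * t"] t pos unfolding mu by simp
  also have "- 2 * (real D * t)\<^sup>2 / (\<Sum>i<D. (1 - (-1::real))\<^sup>2) = - real D * t^2 / 2"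
    unfolding sum4 using D by (simp add: power2_eq_square field_simps)
  also have "{x \<in> space (measure_pmf P). real D * t \<le> \<bar>(\<Sum>j<D. g (x j)) - real D * m\<bar>}
      = {om. t \<le> \<bar>(1 / real D) * (\<Sum>j<D. g (om j)) - m\<bar>}"
  proof -
    have "real D * t \<le> \<bar>A - real D * m\<bar> \<longleftrightarrow> t \<le> \<bar>(1 / real D) * A - m\<bar>" for A
    proof -
      have "\<bar>A - real D * m\<bar> = real D * \<bar>(1 / real D) * A - m\<bar>"
      proof -
        have "A - real D * m = real D * ((1 / real D) * A - m)" using D by (simp add: field_simps)
        thus ?thesis by (simp add: abs_mult)
      qed
      thus ?thesis using D by simp
    qed
    thus ?thesis by auto
  qed
  finally show ?thesis unfolding P_def g_def m_def .
qed

definition gk :: "nat \<Rightarrow> 'i set \<Rightarrow> ('i \<Rightarrow> nat \<Rightarrow> int) \<Rightarrow> (nat \<Rightarrow> real) \<Rightarrow> real" where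
  "gk d I fr D = (1 / real (card I)) * (\<Sum>j\<in>I. cos (freq_dot d (fr j) D))"

lemma kern_gk: "kern d I fr x x' = gk d I fr (\<lambda>k. x k - x' k)"
proof -
  have "freq_dot d w (\<lambda>k. x k - x' k) = freq_dot d w x - freq_dot d w x'" for w
    by (simp add: freq_dot_def sum_subtractf right_diff_distrib)
  thus ?thesis by (simp add: kern_def gk_def cos_diff)
qed

lemma gk_bound: assumes "finite I" "I \<noteq> {}" shows "\<bar>gk d I fr D\<bar> \<le> 1"
proof -
  have "\<bar>\<Sum>j\<in>I. cos (freq_dot d (fr j) D)\<bar> \<le> (\<Sum>j\<in>I. \<bar>cos (freq_dot d (fr j) D)\<bar>)" by (rule sum_abs)
  also have "\<dots> \<le> (\<Sum>j\<in>I. 1)" by (intro sum_mono) auto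
  finally have "\<bar>\<Sum>j\<in>I. cos (freq_dot d (fr j) D)\<bar> \<le> real (card I)" by simp
  moreover have "card I > 0" using assms by (simp add: card_gt_0_iff)
  ultimately show ?thesis by (simp add: gk_def abs_mult field_simps)
qed

lemma gk_zero: assumes "finite I" "I \<noteq> {}" shows "gk d I fr (\<lambda>k. 0) = 1"
  using assms by (simp add: gk_def freq_dot_def card_gt_0_iff)

lemma cos_lip: "\<bar>cos a - cos b\<bar> \<le> \<bar>a - b :: real\<bar>"
proof -
  have "\<bar>cos a - cos b\<bar> = 2 * \<bar>sin ((a + b) / 2)\<bar> * \<bar>sin ((b - a) / 2)\<bar>"
    by (simp add: cos_diff_cos abs_mult)
  also have "\<dots> \<le> 2 * 1 * \<bar>(b - a) / 2\<bar>"
    by (intro mult_mono abs_sin_x_le_abs_x) auto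
  finally show ?thesis by simp
qed

lemma gk_lip:
  assumes fin: "finite I" and ne: "I \<noteq> {}" and bd: "\<And>j k. j \<in> I \<Longrightarrow> k < d \<Longrightarrow> \<bar>fr j k\<bar> \<le> int L"
    and close: "\<And>k. k < d \<Longrightarrow> \<bar>D k - z k\<bar> \<le> h"
  shows "\<bar>gk d I fr D - gk d I fr z\<bar> \<le> real d * real L * h"
proof -
  have one: "\<bar>cos (freq_dot d (fr j) D) - cos (freq_dot d (fr j) z)\<bar> \<le> real d * real L * h" if j: "j \<in> I" for j
  proof -
    have "\<bar>cos (freq_dot d (fr j) D) - cos (freq_dot d (fr j) z)\<bar> \<le> \<bar>freq_dot d (fr j) D - freq_dot d (fr j) z\<bar>"
      by (rule cos_lip)
    also have "freq_dot d (fr j) D - freq_dot d (fr j) z = (\<Sum>k<d. of_int (fr j k) * (D k - z k))"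
      by (simp add: freq_dot_def sum_subtractf right_diff_distrib)
    also have "\<bar>\<dots>\<bar> \<le> (\<Sum>k<d. \<bar>of_int (fr j k) * (D k - z k)\<bar>)" by (rule sum_abs)
    also have "\<dots> \<le> (\<Sum>k<d. real L * h)"
    proof (intro sum_mono)
      fix k assume "k \<in> {..<d}"
      hence k: "k < d" by simp
      have "\<bar>real_of_int (fr j k)\<bar> \<le> real L" using bd[OF j k] by linarith
      moreover have "\<bar>D k - z k\<bar> \<le> h" using close[OF k] .
      ultimately show "\<bar>of_int (fr j k) * (D k - z k)\<bar> \<le> real L * h"
        by (simp add: abs_mult mult_mono)
    qed
    finally show ?thesis by simp
  qed
  have "gk d I fr D - gk d I fr z = (1 / real (card I)) * (\<Sum>j\<in>I. cos (freq_dot d (fr j) D) - cos (freq_dot d (fr j) z))"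
    by (simp add: gk_def sum_subtractf right_diff_distrib)
  also have "\<bar>\<dots>\<bar> \<le> (1 / real (card I)) * (\<Sum>j\<in>I. real d * real L * h)"
  proof -
    have "\<bar>\<Sum>j\<in>I. cos (freq_dot d (fr j) D) - cos (freq_dot d (fr j) z)\<bar> \<le> (\<Sum>j\<in>I. real d * real L * h)"
      using one by (intro order_trans[OF sum_abs] sum_mono) auto
    moreover have "(1 / real (card I)) \<ge> 0" by simp
    ultimately show ?thesis by (simp only: abs_mult abs_of_nonneg) (rule mult_left_mono)
  qed
  also have "\<dots> = real d * real L * h" using fin ne by (simp add: card_gt_0_iff)
  finally show ?thesis .
qed

lemma grid_approx:
  fixes Dl :: "nat \<Rightarrow> real"
  assumes h: "h > 0" and bd: "\<And>k. k < d \<Longrightarrow> \<bar>Dl k\<bar> \<le> dX" and dX: "dX \<ge> 0"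
  defines "R \<equiv> nat \<lceil>dX / h\<rceil>"
  shows "\<exists>m\<in>PiE {..<d} (\<lambda>_. {- int R..int R}). \<forall>k<d. \<bar>Dl k - h * of_int (m k)\<bar> \<le> h"
proof
  define m where "m = restrict (\<lambda>k. \<lfloor>Dl k / h\<rfloor>) {..<d}"
  show "m \<in> PiE {..<d} (\<lambda>_. {- int R..int R})"
  proof -
    have "\<lfloor>Dl k / h\<rfloor> \<in> {- int R..int R}" if k: "k < d" for k
    proof -
      have b: "- dX \<le> Dl k" "Dl k \<le> dX" using bd[OF k] by auto
      have "Dl k / h \<le> dX / h" using b h by (simp add: divide_right_mono)
      hence u: "\<lfloor>Dl k / h\<rfloor> \<le> \<lceil>dX / h\<rceil>" by (meson floor_le_ceiling floor_mono order_trans)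
      have "(- dX) / h \<le> Dl k / h" by (rule divide_right_mono) (use b h in auto)
      hence "\<lfloor>(- dX) / h\<rfloor> \<le> \<lfloor>Dl k / h\<rfloor>" by (rule floor_mono)
      moreover have "\<lfloor>(- dX) / h\<rfloor> = - \<lceil>dX / h\<rceil>" by (simp add: ceiling_def)
      ultimately have l: "- \<lceil>dX / h\<rceil> \<le> \<lfloor>Dl k / h\<rfloor>" by simp
      have "dX / h \<ge> 0" using dX h by simp
      hence "\<lceil>dX / h\<rceil> \<ge> 0" by simp
      thus ?thesis using u l unfolding R_def by auto
    qed
    thus ?thesis by (auto simp: m_def)
  qed
  show "\<forall>k<d. \<bar>Dl k - h * of_int (m k)\<bar> \<le> h"
  proof (intro allI impI)
    fix k assume k: "k < d"
    have "of_int \<lfloor>Dl k / h\<rfloor> \<le> Dl k / h" "Dl k / h < of_int \<lfloor>Dl k / h\<rfloor> + 1" by linarith+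
    hence "h * of_int \<lfloor>Dl k / h\<rfloor> \<le> h * (Dl k / h)" "h * (Dl k / h) < h * (of_int \<lfloor>Dl k / h\<rfloor> + 1)"
      using h by (simp_all only: mult_left_mono mult_strict_left_mono less_imp_le)
    hence "h * of_int \<lfloor>Dl k / h\<rfloor> \<le> Dl k" "Dl k < h * of_int \<lfloor>Dl k / h\<rfloor> + h"
      using h by (simp_all add: algebra_simps)
    thus "\<bar>Dl k - h * of_int (m k)\<bar> \<le> h" using k by (simp add: m_def)
  qed
qed

lemma spectrum_facts:
  shows "finite (spectrum d L)" "spectrum d L \<noteq> {}"
    "\<And>w k. w \<in> spectrum d L \<Longrightarrow> k < d \<Longrightarrow> \<bar>w k\<bar> \<le> int L"
proof -
  show "finite (spectrum d L)" unfolding spectrum_def by (intro finite_PiE) auto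
  show "spectrum d L \<noteq> {}" unfolding spectrum_def by (subst PiE_eq_empty_iff) auto
  fix w k assume "w \<in> spectrum d L" "k < d"
  hence "w k \<in> {- int L..int L}" unfolding spectrum_def by (auto simp: PiE_iff)
  thus "\<bar>w k\<bar> \<le> int L" by (simp add: abs_le_iff)
qed

lemma prob_good:
  fixes DX :: "(nat \<Rightarrow> real) set"
  assumes d: "d \<ge> 1" and L: "L \<ge> 1" and D: "D \<ge> 1" and eta: "eta > 0" and dX: "dX \<ge> 0"
    and bd: "\<And>Dl k. Dl \<in> DX \<Longrightarrow> k < d \<Longrightarrow> \<bar>Dl k\<bar> \<le> dX"
  defines "h \<equiv> eta / (4 * real d * real L)"
  defines "R \<equiv> nat \<lceil>dX / h\<rceil>"
  shows "measure_pmf.prob (distinct_sampling d L D)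
           {om. \<forall>Dl\<in>DX. \<bar>gk d {..<D} om Dl - gk d (spectrum d L) id Dl\<bar> \<le> eta}
         \<ge> 1 - real ((2 * R + 1) ^ d) * (2 * exp (- real D * (eta / 2)^2 / 2))"
proof -
  define Om where "Om = spectrum d L"
  have finO: "finite Om" and neO: "Om \<noteq> {}" and bdO: "\<And>w k. w \<in> Om \<Longrightarrow> k < d \<Longrightarrow> \<bar>w k\<bar> \<le> int L"
    using spectrum_facts unfolding Om_def by auto
  define P where "P = distinct_sampling d L D"
  have P: "P = Pi_pmf {..<D} (\<lambda>_. 0) (\<lambda>_. pmf_of_set Om)"
    by (simp add: P_def Om_def distinct_sampling_def)
  define t where "t = eta / 2"
  have t: "t \<ge> 0" using eta by (simp add: t_def)
  have h: "h > 0" using eta d L by (simp add: h_def)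
  have dLh: "real d * real L * h = eta / 4" using d L by (simp add: h_def field_simps)
  define grid where "grid = (\<lambda>m::nat \<Rightarrow> int. (\<lambda>k. if k < d then h * of_int (m k) else 0))"
  define PE where "PE = PiE {..<d} (\<lambda>_. {- int R..int R})"
  define G where "G = grid ` PE"
  have finPE: "finite PE" by (simp add: PE_def finite_PiE)
  have finG: "finite G" using finPE by (simp add: G_def)
  have cardG: "card G \<le> (2 * R + 1) ^ d"
  proof -
    have "card G \<le> card PE" unfolding G_def using finPE by (rule card_image_le)
    also have "card PE = (2 * R + 1) ^ d"
    proof -
      have "card {- int R..int R} = 2 * R + 1" by simp
      thus ?thesis by (simp add: PE_def card_PiE)
    qed
    finally show ?thesis .
  qed
  define bad where "bad = (\<lambda>z. {om. t \<le> \<bar>(1 / real D) * (\<Sum>j<D. cos (freq_dot d (om j) z))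
                - (1 / real (card Om)) * (\<Sum>w\<in>Om. cos (freq_dot d w z))\<bar>})"
  have pbad: "measure_pmf.prob P (bad z) \<le> 2 * exp (- real D * t^2 / 2)" for z
    unfolding P bad_def by (rule hoeff_z[OF D t finO neO])
  define Good where "Good = {om. \<forall>Dl\<in>DX. \<bar>gk d {..<D} om Dl - gk d (spectrum d L) id Dl\<bar> \<le> eta}"
  have gk_r: "gk d {..<D} om z = (1 / real D) * (\<Sum>j<D. cos (freq_dot d (om j) z))" for om z
    by (simp add: gk_def)
  have gk_v: "gk d (spectrum d L) id z = (1 / real (card Om)) * (\<Sum>w\<in>Om. cos (freq_dot d w z))" for z
    by (simp add: gk_def Om_def)
  have sub: "UNIV - ((UNIV - set_pmf P) \<union> (\<Union>z\<in>G. bad z)) \<subseteq> Good"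
  proof
    fix om assume om: "om \<in> UNIV - ((UNIV - set_pmf P) \<union> (\<Union>z\<in>G. bad z))"
    hence inS: "om \<in> set_pmf P" and nb: "\<And>z. z \<in> G \<Longrightarrow> om \<notin> bad z" by auto
    have omO: "om j \<in> Om" if "j < D" for j
      using inS that unfolding P by (auto simp: set_Pi_pmf PiE_dflt_def finO neO)
    show "om \<in> Good" unfolding Good_def
    proof (intro CollectI ballI)
      fix Dl assume Dl: "Dl \<in> DX"
      have ex: "\<exists>m\<in>PE. \<forall>k<d. \<bar>Dl k - h * of_int (m k)\<bar> \<le> h"
        unfolding PE_def R_def by (rule grid_approx[OF h bd[OF Dl] dX])
      then obtain m where m: "m \<in> PE" and mc: "\<forall>k<d. \<bar>Dl k - h * of_int (m k)\<bar> \<le> h"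
        by (elim bexE)
      define z where "z = grid m"
      have zG: "z \<in> G" using m by (simp add: z_def G_def)
      have close: "\<bar>Dl k - z k\<bar> \<le> h" if "k < d" for k using mc that by (simp add: z_def grid_def)
      have l1: "\<bar>gk d {..<D} om Dl - gk d {..<D} om z\<bar> \<le> real d * real L * h"
        by (rule gk_lip) (use D omO bdO close in \<open>auto simp: lessThan_empty_iff\<close>)
      have l2: "\<bar>gk d (spectrum d L) id Dl - gk d (spectrum d L) id z\<bar> \<le> real d * real L * h"
        by (rule gk_lip) (use finO neO bdO close in \<open>auto simp: Om_def\<close>)
      have l3: "\<bar>gk d {..<D} om z - gk d (spectrum d L) id z\<bar> < t"
        using nb[OF zG] unfolding bad_def gk_r gk_v by (simp add: not_le)
      show "\<bar>gk d {..<D} om Dl - gk d (spectrum d L) id Dl\<bar> \<le> eta"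
        using l1 l2 l3 dLh unfolding t_def by linarith
    qed
  qed
  define B where "B = (UNIV - set_pmf P) \<union> (\<Union>z\<in>G. bad z)"
  have u1: "measure_pmf.prob P B \<le> measure_pmf.prob P (UNIV - set_pmf P) + measure_pmf.prob P (\<Union>z\<in>G. bad z)"
    unfolding B_def by (rule measure_Un_le) simp_all
  have u2: "measure_pmf.prob P (UNIV - set_pmf P) = 0"
    by (simp add: measure_pmf_zero_iff)
  have u3: "measure_pmf.prob P (\<Union>z\<in>G. bad z) \<le> (\<Sum>z\<in>G. measure_pmf.prob P (bad z))"
    by (rule measure_UNION_le) (simp_all add: finG)
  have u4: "(\<Sum>z\<in>G. measure_pmf.prob P (bad z)) \<le> (\<Sum>z\<in>G. 2 * exp (- real D * t^2 / 2))"
    by (intro sum_mono pbad)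
  have u5: "(\<Sum>z\<in>G. 2 * exp (- real D * t^2 / 2)) = real (card G) * (2 * exp (- real D * t^2 / 2))"
    by simp
  have u6: "real (card G) * (2 * exp (- real D * t^2 / 2)) \<le> real ((2 * R + 1) ^ d) * (2 * exp (- real D * t^2 / 2))"
  proof (rule mult_right_mono)
    show "real (card G) \<le> real ((2 * R + 1) ^ d)" using cardG by (simp only: of_nat_le_iff)
  qed simp
  have pB: "measure_pmf.prob P B \<le> real ((2 * R + 1) ^ d) * (2 * exp (- real D * t^2 / 2))"
    using u1 u2 u3 u4 u5 u6 by linarith
  have c1: "measure_pmf.prob P (UNIV - B) = 1 - measure_pmf.prob P B"
    using measure_pmf.prob_compl[of B P] by simp
  have c2: "measure_pmf.prob P (UNIV - B) \<le> measure_pmf.prob P Good"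
    using sub unfolding B_def by (intro measure_pmf.finite_measure_mono) simp_all
  show ?thesis using pB c1 c2 unfolding P_def Good_def t_def by linarith
qed

lemma numeric:
  fixes sg lam eps delta dX :: real and d L D :: nat
  assumes d: "d \<ge> 1" and L: "L \<ge> 1" and sg: "sg \<ge> 0" and lam: "lam > 0" and eps: "eps > 0"
    and delta: "0 < delta" "delta < 1" and dX: "dX > 0"
    and nontriv: "eps < 2 * sg * (1 + lam) / lam^2"
    and hyp: "real D \<ge> 16 * (real d * (sg + 1)^2 * (1 + lam)^2 / (lam^4 * eps^2)) *
          (ln (real d * real L ^ 2 * dX) + ln (14 * (sg + 1) * (1 + 1 / dX) * (1 + lam) / (eps * lam^2)) - ln delta)"
  defines "eta \<equiv> eps * lam^2 / ((sg + 1) * (1 + lam))"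
  defines "h \<equiv> eta / (4 * real d * real L)"
  defines "R \<equiv> nat \<lceil>dX / h\<rceil>"
  shows "real ((2 * R + 1) ^ d) * (2 * exp (- real D * (eta / 2)^2 / 2)) \<le> delta"
proof -
  have eta: "eta > 0" using eps lam sg by (simp add: eta_def)
  have eta2: "eta < 2"
  proof -
    have "eps < 2 * (sg + 1) * (1 + lam) / lam^2"
    proof -
      have "2 * sg * (1 + lam) \<le> 2 * (sg + 1) * (1 + lam)" using lam by simp
      hence "2 * sg * (1 + lam) / lam^2 \<le> 2 * (sg + 1) * (1 + lam) / lam^2"
        by (rule divide_right_mono) simp
      thus ?thesis using nontriv by linarith
    qed
    hence "eps * lam^2 < 2 * ((sg + 1) * (1 + lam))" using lam by (simp add: pos_less_divide_eq mult_ac)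
    moreover have "(sg + 1) * (1 + lam) > 0" using sg lam by simp
    ultimately show ?thesis unfolding eta_def by (simp add: pos_divide_less_eq)
  qed
  have h: "h > 0" using eta d L by (simp add: h_def)
  have pref: "real d * (sg + 1)^2 * (1 + lam)^2 / (lam^4 * eps^2) = real d / eta^2"
    using lam eps sg unfolding eta_def by (simp add: field_simps power2_eq_square power4_eq_xxxx)
  define Q where "Q = ln (14 * real d * (real L)^2 * (dX + 1) / eta)"
  have arg: "real d * real L ^ 2 * dX * (14 * (sg + 1) * (1 + 1 / dX) * (1 + lam) / (eps * lam^2))
      = 14 * real d * (real L)^2 * (dX + 1) / eta"
    using dX lam eps sg unfolding eta_def by (simp add: field_simps)
  have Bq: "ln (real d * real L ^ 2 * dX) + ln (14 * (sg + 1) * (1 + 1 / dX) * (1 + lam) / (eps * lam^2)) = Q"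
  proof -
    have p1: "real d * real L ^ 2 * dX > 0" using d L dX by simp
    have p2: "14 * (sg + 1) * (1 + 1 / dX) * (1 + lam) / (eps * lam^2) > 0"
      using sg dX lam eps by (simp add: add_pos_pos)
    have "ln ((real d * real L ^ 2 * dX) * (14 * (sg + 1) * (1 + 1 / dX) * (1 + lam) / (eps * lam^2)))
        = ln (real d * real L ^ 2 * dX) + ln (14 * (sg + 1) * (1 + 1 / dX) * (1 + lam) / (eps * lam^2))"
      by (rule ln_mult_pos[OF p1 p2])
    thus ?thesis unfolding Q_def arg by simp
  qed
  have dL1: "real d * (real L)^2 \<ge> 1"
  proof -
    have "real d \<ge> 1" "(real L)^2 \<ge> 1" using d L by (simp_all add: one_le_power)
    thus ?thesis by (metis mult_mono mult_1 zero_le_one order_trans)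
  qed
  have dLL: "real d * real L \<le> real d * (real L)^2"
  proof -
    have "real L \<le> real L * real L" using L by (simp add: mult_le_cancel_left1)
    thus ?thesis by (simp add: power2_eq_square mult_left_mono)
  qed
  have big: "14 * real d * (real L)^2 * (dX + 1) / eta \<ge> 7"
  proof -
    have "real d * (real L)^2 * (dX + 1) \<ge> 1 * 1"
      using dL1 dX by (intro mult_mono) auto
    hence "14 * real d * (real L)^2 * (dX + 1) \<ge> 14" by simp
    hence "14 * real d * (real L)^2 * (dX + 1) / eta \<ge> 14 / eta"
      using eta by (simp add: divide_right_mono)
    moreover have "14 / eta \<ge> 7" using eta eta2 by (simp add: field_simps)
    ultimately show ?thesis by linarith
  qed
  have Q0: "Q \<ge> ln 2" unfolding Q_def using big by (simp add: ln_le_cancel_iff)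
  have ln2: "ln 2 > (0::real)" by simp
  have R1: "real (2 * R + 1) \<le> 14 * real d * (real L)^2 * (dX + 1) / eta"
  proof -
    have "real R \<le> dX / h + 1"
    proof -
      have "real R = real_of_int \<lceil>dX / h\<rceil>" using dX h unfolding R_def by simp
      thus ?thesis by linarith
    qed
    hence "real (2 * R + 1) \<le> 2 * (dX / h) + 3" by simp
    also have "dX / h = 4 * real d * real L * dX / eta" using eta d L by (simp add: h_def field_simps)
    also have "2 * (4 * real d * real L * dX / eta) + 3 \<le> 14 * real d * (real L)^2 * (dX + 1) / eta"
    proof -
      have "3 \<le> 6 / eta" using eta eta2 by (simp add: field_simps)
      also have "6 / eta \<le> 6 * (real d * (real L)^2) / eta" using dL1 eta by (simp add: divide_right_mono)
      finally have a: "3 \<le> 6 * (real d * (real L)^2) / eta" .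
      have b: "2 * (4 * real d * real L * dX / eta) \<le> 8 * (real d * (real L)^2) * dX / eta"
        using dLL dX eta by (simp add: divide_right_mono field_simps mult_right_mono)
      have "8 * (real d * (real L)^2) * dX / eta + 6 * (real d * (real L)^2) / eta
          \<le> 14 * real d * (real L)^2 * (dX + 1) / eta"
        using eta dX dL1 by (simp add: field_simps)
      thus ?thesis using a b by linarith
    qed
    finally show ?thesis .
  qed
  have lnR: "ln (real (2 * R + 1)) \<le> Q"
    unfolding Q_def using R1 by (subst ln_le_cancel_iff) auto
  have lnd: "- ln delta \<ge> 0" using delta by simp
  have Dbound: "real D * eta^2 / 8 \<ge> 2 * real d * (Q - ln delta)"
  proof -
    have "real D \<ge> 16 * (real d / eta^2) * (Q - ln delta)" using hyp unfolding pref Bq .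
    hence "real D * eta^2 \<ge> 16 * real d * (Q - ln delta)" using eta by (simp add: field_simps)
    thus ?thesis by simp
  qed
  have key: "ln 2 + real d * ln (real (2 * R + 1)) - ln delta \<le> real D * eta^2 / 8"
  proof -
    have "real d * ln (real (2 * R + 1)) \<le> real d * Q" using lnR d by (simp add: mult_left_mono)
    moreover have "1 * Q \<le> real d * Q"
    proof (rule mult_right_mono)
      show "Q \<ge> 0" using Q0 ln2 by linarith
    qed (use d in auto)
    moreover have "1 * (- ln delta) \<le> real d * (- ln delta)" using lnd d by (intro mult_right_mono) auto
    moreover have "2 * real d * (Q - ln delta) = 2 * (real d * Q) + 2 * (real d * (- ln delta))"
      by (simp add: algebra_simps)
    ultimately show ?thesis using Dbound Q0 lnd by linarith
  qed
  have "real ((2 * R + 1) ^ d) * (2 * exp (- real D * (eta / 2)^2 / 2))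
      = exp (ln 2 + real d * ln (real (2 * R + 1)) - real D * eta^2 / 8)"
  proof -
    have pos: "real (2 * R + 1) > 0" by simp
    have e1: "real ((2 * R + 1) ^ d) = exp (real d * ln (real (2 * R + 1)))"
    proof -
      have "exp (real d * ln (real (2 * R + 1))) = exp (ln (real (2 * R + 1))) ^ d"
        by (rule exp_of_nat_mult)
      also have "exp (ln (real (2 * R + 1))) = real (2 * R + 1)" using pos by (rule exp_ln)
      finally show ?thesis by (simp only: of_nat_power)
    qed
    have e2: "- real D * (eta / 2)^2 / 2 = - (real D * eta^2 / 8)" by (simp add: power2_eq_square)
    have e3: "exp (ln 2 + real d * ln (real (2 * R + 1)) - real D * eta^2 / 8)
        = 2 * exp (real d * ln (real (2 * R + 1))) * exp (- (real D * eta^2 / 8))"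
    proof -
      have "exp (ln 2 + real d * ln (real (2 * R + 1)) - real D * eta^2 / 8)
          = exp (ln 2) * exp (real d * ln (real (2 * R + 1))) / exp (real D * eta^2 / 8)"
        by (simp only: exp_diff exp_add)
      also have "exp (ln 2) = (2::real)" by simp
      also have "1 / exp (real D * eta^2 / 8) = exp (- (real D * eta^2 / 8))" by (simp add: exp_minus inverse_eq_divide)
      hence "2 * exp (real d * ln (real (2 * R + 1))) / exp (real D * eta^2 / 8)
          = 2 * exp (real d * ln (real (2 * R + 1))) * exp (- (real D * eta^2 / 8))"
        by (metis times_divide_eq_right mult.right_neutral)
      finally show ?thesis .
    qed
    show ?thesis unfolding e1 e2 e3 by (simp only: mult.assoc mult.left_commute[of 2])
  qed
  also have "\<dots> \<le> exp (ln delta)" using key by simp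
  also have "\<dots> = delta" using delta by simp
  finally show ?thesis .
qed

lemma model_diff:
  fixes X :: "(nat \<Rightarrow> real) set"
  assumes L: "L \<ge> 1" and M: "M \<ge> 1" and D: "D \<ge> 1" and lam: "lam > 0" and eta: "eta \<ge> 0"
    and xsX: "\<And>i. i < M \<Longrightarrow> xs i \<in> X"
    and good: "\<And>x x'. x \<in> X \<Longrightarrow> x' \<in> X \<Longrightarrow>
        \<bar>gk d {..<D} om (\<lambda>k. x k - x' k) - gk d (spectrum d L) id (\<lambda>k. x k - x' k)\<bar> \<le> eta"
    and x: "x \<in> X"
  shows "\<bar>vqc_model d L M xs ys lam x - rff_model d D om M xs ys lam x\<bar> \<le> eta * sigma_y M ys * (1 + lam) / lam^2"
proof -
  define Om where "Om = spectrum d L"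
  have finO: "finite Om" and neO: "Om \<noteq> {}" using spectrum_facts unfolding Om_def by auto
  have finD: "finite {..<D}" and neD: "{..<D} \<noteq> {}" using D by (auto simp: lessThan_empty_iff)
  obtain r where r1: "\<forall>i<M. r i + (1 / (real M * lam)) * (\<Sum>l<M. kern d Om id (xs i) (xs l) * r l) = ys i"
      and r2: "\<forall>x. ridge_model d Om id M xs ys lam x = (1 / (real M * lam)) * (\<Sum>i<M. r i * kern d Om id x (xs i))"
    using ridge_char[OF finO neO lam M] by blast
  obtain rt where rt1: "\<forall>i<M. rt i + (1 / (real M * lam)) * (\<Sum>l<M. kern d {..<D} om (xs i) (xs l) * rt l) = ys i"
      and rt2: "\<forall>x. ridge_model d {..<D} om M xs ys lam x = (1 / (real M * lam)) * (\<Sum>i<M. rt i * kern d {..<D} om x (xs i))"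
    using ridge_char[OF finD neD lam M] by blast
  have bnd: "\<bar>kern d Om id a b - kern d {..<D} om a b\<bar> \<le> eta" if "a \<in> X" "b \<in> X" for a b
    using good[OF that] unfolding kern_gk Om_def by (simp add: abs_minus_commute)
  have "\<bar>(1 / (real M * lam)) * (\<Sum>i<M. r i * kern d Om id x (xs i))
        - (1 / (real M * lam)) * (\<Sum>i<M. rt i * kern d {..<D} om x (xs i))\<bar>
        \<le> eta * sigma_y M ys * (1 + lam) / lam^2"
  proof (rule perturb[OF lam M eta kern_psd kern_psd r1 rt1])
    show "\<bar>kern d Om id (xs i) (xs l) - kern d {..<D} om (xs i) (xs l)\<bar> \<le> eta" if "i < M" "l < M" for i l
      using bnd xsX that by blast
    show "\<bar>kern d Om id x (xs i)\<bar> \<le> 1" if "i < M" for i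
      unfolding kern_gk by (rule gk_bound[OF finO neO])
    show "\<bar>kern d Om id x (xs i) - kern d {..<D} om x (xs i)\<bar> \<le> eta" if "i < M" for i
      using bnd x xsX that by blast
  qed
  thus ?thesis using r2 rt2 unfolding vqc_model_def rff_model_def Om_def by simp
qed

lemma diam_facts:
  fixes X :: "(nat \<Rightarrow> real) set"
  assumes X: "compact X" and ne: "X \<noteq> {}"
  shows "\<And>x x'. x \<in> X \<Longrightarrow> x' \<in> X \<Longrightarrow> dist_d d x x' \<le> diam_d d X" and "diam_d d X \<ge> 0"
proof -
  define f where "f = (\<lambda>p::(nat \<Rightarrow> real) \<times> (nat \<Rightarrow> real). dist_d d (fst p) (snd p))"
  have cf: "continuous_on UNIV (\<lambda>p::(nat \<Rightarrow> real) \<times> (nat \<Rightarrow> real). fst p k)" for k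
    by (rule continuous_on_product_then_coordinatewise[OF continuous_on_fst[OF continuous_on_id]])
  have cs: "continuous_on UNIV (\<lambda>p::(nat \<Rightarrow> real) \<times> (nat \<Rightarrow> real). snd p k)" for k
    by (rule continuous_on_product_then_coordinatewise[OF continuous_on_snd[OF continuous_on_id]])
  have cont: "continuous_on UNIV f"
    unfolding f_def dist_d_def by (intro continuous_intros cf cs)
  have "compact (f ` (X \<times> X))"
    by (rule compact_continuous_image[OF continuous_on_subset[OF cont] compact_Times[OF X X]]) simp
  hence bdd: "bdd_above (f ` (X \<times> X))" by (intro bounded_imp_bdd_above compact_imp_bounded)
  have eq: "diam_d d X = (SUP p\<in>X \<times> X. f p)" by (simp add: diam_d_def f_def)
  show le: "dist_d d x x' \<le> diam_d d X" if "x \<in> X" "x' \<in> X" for x x'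
  proof -
    have "f (x, x') \<le> (SUP p\<in>X \<times> X. f p)" by (rule cSUP_upper) (use that bdd in auto)
    thus ?thesis by (simp add: eq f_def)
  qed
  obtain x where "x \<in> X" using ne by blast
  have "0 \<le> dist_d d x x" by (simp add: dist_d_def)
  also have "\<dots> \<le> diam_d d X" by (rule le) fact+
  finally show "diam_d d X \<ge> 0" .
qed

lemma coord_le_dist: assumes "k < d" shows "\<bar>x k - x' k\<bar> \<le> dist_d d x x'"
proof -
  have "\<bar>x k - x' k\<bar>^2 \<le> (\<Sum>j<d. (x j - x' j)^2)"
    using assms by (simp add: member_le_sum[of k "{..<d}" "\<lambda>j. (x j - x' j)^2"])
  thus ?thesis unfolding dist_d_def by (rule real_le_rsqrt)
qed

lemma main_lemma:
  fixes X :: "(nat \<Rightarrow> real) set" and xs :: "nat \<Rightarrow> nat \<Rightarrow> real" and ys :: "nat \<Rightarrow> real"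
  assumes d: "d \<ge> 1" and L: "L \<ge> 1" and M: "M \<ge> 1" and D: "D \<ge> 1"
    and X: "compact X" and inX: "\<forall>x\<in>X. in_Rd d x" and xsX: "\<forall>i<M. xs i \<in> X"
    and lam: "lam > 0" and eps: "eps > 0" and delta: "0 < delta" "delta < 1"
    and hyp: "real D \<ge> 16 * (real d * (\<bar>sigma_y M ys\<bar> + 1)^2 * (1 + lam)^2 / (lam^4 * eps^2)) *
          (ln (real d * real L ^ 2 * diam_d d X)
           + ln (14 * (\<bar>sigma_y M ys\<bar> + 1) * (1 + 1 / \<bar>diam_d d X\<bar>) * (1 + lam) / (eps * lam^2)) - ln delta)"
  shows "measure_pmf.prob (distinct_sampling d L D)
         {om. \<forall>x\<in>X. \<bar>vqc_model d L M xs ys lam x - rff_model d D om M xs ys lam x\<bar> \<le> eps}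
         \<ge> 1 - delta"
proof -
  define sg where "sg = sigma_y M ys"
  have sg: "sg \<ge> 0" unfolding sg_def sigma_y_def by (intro real_sqrt_ge_zero mult_nonneg_nonneg sum_nonneg) auto
  define E where "E = {om. \<forall>x\<in>X. \<bar>vqc_model d L M xs ys lam x - rff_model d D om M xs ys lam x\<bar> \<le> eps}"
  define P where "P = distinct_sampling d L D"
  have allE: "measure_pmf.prob P E \<ge> 1 - delta" if "\<And>om. om \<in> E" for dummy :: bool
  proof -
    have "E = UNIV" using that by auto
    hence "measure_pmf.prob P E = 1" by simp
    thus ?thesis using delta by simp
  qed
  have xsX': "\<And>i. i < M \<Longrightarrow> xs i \<in> X" using xsX by blast
  have gk_r_b: "\<bar>gk d {..<D} om z\<bar> \<le> 1" for om z
    by (rule gk_bound) (use D in \<open>auto simp: lessThan_empty_iff\<close>)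
  have gk_v_b: "\<bar>gk d (spectrum d L) id z\<bar> \<le> 1" for z
    by (rule gk_bound) (use spectrum_facts in auto)
  show ?thesis
  proof (cases "X = {}")
    case True
    show ?thesis unfolding P_def[symmetric] E_def[symmetric] by (rule allE) (simp add: E_def True)
  next
    case neX: False
    define dX where "dX = diam_d d X"
    have dist_le: "\<And>x x'. x \<in> X \<Longrightarrow> x' \<in> X \<Longrightarrow> dist_d d x x' \<le> dX" and dX0: "dX \<ge> 0"
      using diam_facts[OF X neX] unfolding dX_def by auto
    have coord: "\<bar>x k - x' k\<bar> \<le> dX" if "x \<in> X" "x' \<in> X" "k < d" for x x' k
      using coord_le_dist[OF that(3), of x x'] dist_le[OF that(1,2)] by linarith
    show ?thesis
    proof (cases "2 * sg * (1 + lam) / lam^2 \<le> eps")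
      case triv: True
      show ?thesis unfolding P_def[symmetric] E_def[symmetric]
      proof (rule allE)
        fix om
        have g: "\<bar>gk d {..<D} om (\<lambda>k. x k - x' k) - gk d (spectrum d L) id (\<lambda>k. x k - x' k)\<bar> \<le> 2" for x x'
          using gk_r_b[of om "\<lambda>k. x k - x' k"] gk_v_b[of "\<lambda>k. x k - x' k"] by linarith
        show "om \<in> E" unfolding E_def
        proof (intro CollectI ballI)
          fix x assume x: "x \<in> X"
          have "\<bar>vqc_model d L M xs ys lam x - rff_model d D om M xs ys lam x\<bar> \<le> 2 * sigma_y M ys * (1 + lam) / lam^2"
            by (rule model_diff[OF L M D lam _ xsX' g x]) simp
          thus "\<bar>vqc_model d L M xs ys lam x - rff_model d D om M xs ys lam x\<bar> \<le> eps"
            using triv unfolding sg_def by linarith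
        qed
      qed
    next
      case nontriv: False
      show ?thesis
      proof (cases "dX = 0")
        case True
        show ?thesis unfolding P_def[symmetric] E_def[symmetric]
        proof (rule allE)
          fix om
          have z: "(\<lambda>k. x k - x' k) = (\<lambda>k. 0)" if "x \<in> X" "x' \<in> X" for x x'
          proof
            fix k show "x k - x' k = 0"
            proof (cases "k < d")
              case True thus ?thesis using coord[OF that True] \<open>dX = 0\<close> by simp
            next
              case False
              hence "d \<le> k" by simp
              thus ?thesis using inX that unfolding in_Rd_def by (metis diff_self)
            qed
          qed
          have g: "\<bar>gk d {..<D} om (\<lambda>k. x k - x' k) - gk d (spectrum d L) id (\<lambda>k. x k - x' k)\<bar> \<le> 0"
            if "x \<in> X" "x' \<in> X" for x x'
          proof -
            have "gk d {..<D} om (\<lambda>k. 0) = 1" by (rule gk_zero) (use D in \<open>auto simp: lessThan_empty_iff\<close>)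
            moreover have "gk d (spectrum d L) id (\<lambda>k. 0) = 1" by (rule gk_zero) (use spectrum_facts in auto)
            ultimately show ?thesis unfolding z[OF that] by simp
          qed
          show "om \<in> E" unfolding E_def
          proof (intro CollectI ballI)
            fix x assume x: "x \<in> X"
            have "\<bar>vqc_model d L M xs ys lam x - rff_model d D om M xs ys lam x\<bar> \<le> 0 * sigma_y M ys * (1 + lam) / lam^2"
              by (rule model_diff[OF L M D lam _ xsX' g x]) simp_all
            thus "\<bar>vqc_model d L M xs ys lam x - rff_model d D om M xs ys lam x\<bar> \<le> eps"
              using eps by simp
          qed
        qed
      next
        case dXne: False
        have dXp: "dX > 0" using dX0 dXne by simp
        define eta where "eta = eps * lam^2 / ((sg + 1) * (1 + lam))"
        have eta: "eta > 0" using eps lam sg by (simp add: eta_def)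
        define Good where "Good = {om. \<forall>Dl\<in>{Dl. \<exists>x\<in>X. \<exists>x'\<in>X. Dl = (\<lambda>k. x k - x' k)}.
                  \<bar>gk d {..<D} om Dl - gk d (spectrum d L) id Dl\<bar> \<le> eta}"
        define h where "h = eta / (4 * real d * real L)"
        define R where "R = nat \<lceil>dX / h\<rceil>"
        have pg: "measure_pmf.prob P Good \<ge> 1 - real ((2 * R + 1) ^ d) * (2 * exp (- real D * (eta / 2)^2 / 2))"
          unfolding P_def Good_def R_def h_def
          by (rule prob_good[OF d L D eta dX0]) (auto intro: coord)
        have hyp': "real D \<ge> 16 * (real d * (sg + 1)^2 * (1 + lam)^2 / (lam^4 * eps^2)) *
          (ln (real d * real L ^ 2 * dX) + ln (14 * (sg + 1) * (1 + 1 / dX) * (1 + lam) / (eps * lam^2)) - ln delta)"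
          using hyp sg dXp unfolding sg_def[symmetric] dX_def[symmetric] by simp
        have nt: "eps < 2 * sg * (1 + lam) / lam^2" using nontriv by simp
        have num: "real ((2 * R + 1) ^ d) * (2 * exp (- real D * (eta / 2)^2 / 2)) \<le> delta"
          unfolding R_def h_def eta_def
          by (rule numeric[OF d L sg lam eps delta dXp nt hyp'])
        have sub: "Good \<subseteq> E"
        proof
          fix om assume om: "om \<in> Good"
          have g: "\<bar>gk d {..<D} om (\<lambda>k. x k - x' k) - gk d (spectrum d L) id (\<lambda>k. x k - x' k)\<bar> \<le> eta"
            if "x \<in> X" "x' \<in> X" for x x'
            using om that unfolding Good_def by blast
          have etab: "eta * sg * (1 + lam) / lam^2 \<le> eps"
          proof -
            have pos: "(sg + 1) * (1 + lam) > 0" using sg lam by simp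
            have e1: "eta * ((sg + 1) * (1 + lam)) = eps * lam^2"
            proof -
              have a: "sg + 1 \<noteq> 0" "1 + lam \<noteq> 0" using sg lam by linarith+
              show ?thesis unfolding eta_def using a by simp
            qed
            have "eta * sg * (1 + lam) \<le> eta * ((sg + 1) * (1 + lam))"
              using eta lam by (simp add: algebra_simps)
            hence "eta * sg * (1 + lam) \<le> eps * lam^2" using e1 by simp
            thus ?thesis using lam by (simp add: pos_divide_le_eq)
          qed
          show "om \<in> E" unfolding E_def
          proof (intro CollectI ballI)
            fix x assume x: "x \<in> X"
            have "\<bar>vqc_model d L M xs ys lam x - rff_model d D om M xs ys lam x\<bar> \<le> eta * sigma_y M ys * (1 + lam) / lam^2"
              by (rule model_diff[OF L M D lam _ xsX' g x]) (use eta in simp_all)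
            thus "\<bar>vqc_model d L M xs ys lam x - rff_model d D om M xs ys lam x\<bar> \<le> eps"
              using etab unfolding sg_def by linarith
          qed
        qed
        have "measure_pmf.prob P Good \<le> measure_pmf.prob P E"
          using sub by (intro measure_pmf.finite_measure_mono) simp_all
        thus ?thesis using pg num unfolding P_def E_def by linarith
      qed
    qed
  qed
qed


theorem theorem1:
  "\<exists>C1 C2 :: real \<Rightarrow> real \<Rightarrow> real. (\<forall>s r. C1 s r > 0 \<and> C2 s r > 0) \<and>
   (\<exists>K::real. K > 0 \<and>
    (\<forall>(d::nat) (L::nat) (X::(nat \<Rightarrow> real) set) (M::nat) (xs::nat \<Rightarrow> nat \<Rightarrow> real)
       (ys::nat \<Rightarrow> real) (lam::real) (eps::real) (delta::real) (D::nat).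
       d \<ge> 1 \<longrightarrow> L \<ge> 1 \<longrightarrow> M \<ge> 1 \<longrightarrow> D \<ge> 1 \<longrightarrow>
       compact X \<longrightarrow> (\<forall>x\<in>X. in_Rd d x) \<longrightarrow> (\<forall>i<M. xs i \<in> X) \<longrightarrow>
       lam > 0 \<longrightarrow> eps > 0 \<longrightarrow> 0 < delta \<longrightarrow> delta < 1 \<longrightarrow>
       (let sy = sigma_y M ys; dX = diam_d d X;
            c1 = C1 sy dX; c2 = C2 sy dX in
        real D \<ge> K * (real d * c1 * (1 + lam)^2 / (lam^4 * eps^2)) *
          (ln (real d * real L ^ 2 * dX) + ln (c2 * (1 + lam) / (eps * lam^2)) - ln delta))
       \<longrightarrow>
       measure_pmf.prob (distinct_sampling d L D)
         {om. \<forall>x\<in>X. \<bar>vqc_model d L M xs ys lam x - rff_model d D om M xs ys lam x\<bar> \<le> eps}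
         \<ge> 1 - delta))"
proof -
  define C1 :: "real \<Rightarrow> real \<Rightarrow> real" where "C1 = (\<lambda>s r. (\<bar>s\<bar> + 1)^2)"
  define C2 :: "real \<Rightarrow> real \<Rightarrow> real" where "C2 = (\<lambda>s r. 14 * (\<bar>s\<bar> + 1) * (1 + 1 / \<bar>r\<bar>))"
  have pos: "\<forall>s r. C1 s r > 0 \<and> C2 s r > 0"
  proof (intro allI conjI)
    fix s r :: real
    show "C1 s r > 0" unfolding C1_def by (simp add: add_pos_nonneg)
    have "1 + 1 / \<bar>r\<bar> > 0" by (simp add: add_pos_nonneg)
    thus "C2 s r > 0" unfolding C2_def by (simp add: add_pos_nonneg)
  qed
  show ?thesis
  proof (rule exI[of _ C1], rule exI[of _ C2], rule conjI[OF pos], rule exI[of _ "16::real"], intro conjI allI impI)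
    show "(16::real) > 0" by simp
  next
    fix d L :: nat and X :: "(nat \<Rightarrow> real) set" and M :: nat and xs :: "nat \<Rightarrow> nat \<Rightarrow> real"
      and ys :: "nat \<Rightarrow> real" and lam eps delta :: real and D :: nat
    assume a: "d \<ge> 1" "L \<ge> 1" "M \<ge> 1" "D \<ge> 1" "compact X" "\<forall>x\<in>X. in_Rd d x" "\<forall>i<M. xs i \<in> X"
      "lam > 0" "eps > 0" "0 < delta" "delta < 1"
    assume h: "let sy = sigma_y M ys; dX = diam_d d X; c1 = C1 sy dX; c2 = C2 sy dX in
        real D \<ge> 16 * (real d * c1 * (1 + lam)^2 / (lam^4 * eps^2)) *
          (ln (real d * real L ^ 2 * dX) + ln (c2 * (1 + lam) / (eps * lam^2)) - ln delta)"
    show "measure_pmf.prob (distinct_sampling d L D)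
         {om. \<forall>x\<in>X. \<bar>vqc_model d L M xs ys lam x - rff_model d D om M xs ys lam x\<bar> \<le> eps}
         \<ge> 1 - delta"
      using h unfolding Let_def C1_def C2_def by (rule main_lemma[OF a])
  qed
qed

end
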